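(* Let $\mathbb{K}$ be a perfect field and $I\subset\mathbb{K}[X_1,\dots,X_n]$ a zero-dimensional $\mathfrak{m}$-primary ideal for some maximal ideal $\mathfrak{m}$, with $D=\deg(I)$. Let the minimal polynomial of $X_n$ in $\mathbb{K}[X_1,\dots,X_n]/I$ be $P^e$ with $P\in\mathbb{K}[Z]$ irreducible of degree $f$. Let $\mathbb{L}=\mathbb{K}[Z]/\langle P\rangle$, $\zeta$ the residue class of $Z$ in $\mathbb{L}$, and $I'=I+\langle(X_n-\zeta)^e\rangle\subset\mathbb{L}[X_1,\dots,X_n]$ (where $I$ denotes the extended ideal). Then $\deg(I')=D/f$.
   Context: The degree $\deg(J)$ of a zero-dimensional ideal $J$ in a polynomial ring over a field $F$ is the $F$-vector space dimension of the quotient ring. *)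

theory Defs
  imports "HOL-Library.Poly_Mapping" "HOL-Computational_Algebra.Polynomial"
begin

text \<open>Multivariate polynomials over 'a in the variables of the finite type 'v
  (standing for X_1,...,X_n).\<close>
type_synonym ('v, 'a) mpoly = "('v \<Rightarrow>\<^sub>0 nat) \<Rightarrow>\<^sub>0 'a"

definition mconst :: "'a::zero \<Rightarrow> ('v, 'a) mpoly" where
  "mconst c = Poly_Mapping.single 0 c"

definition mvar :: "'v \<Rightarrow> ('v, 'a::{zero,one}) mpoly" where
  "mvar v = Poly_Mapping.single (Poly_Mapping.single v 1) 1"

definition is_ideal :: "'r::comm_ring_1 set \<Rightarrow> bool" where
  "is_ideal J \<longleftrightarrow> 0 \<in> J \<and> (\<forall>a\<in>J. \<forall>b\<in>J. a + b \<in> J) \<and> (\<forall>a\<in>J. \<forall>r. r * a \<in> J)"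

definition ideal_gen :: "'r::comm_ring_1 set \<Rightarrow> 'r set" where
  "ideal_gen S = \<Inter>{J. is_ideal J \<and> S \<subseteq> J}"

definition is_maximal_ideal :: "'r::comm_ring_1 set \<Rightarrow> bool" where
  "is_maximal_ideal M \<longleftrightarrow> is_ideal M \<and> M \<noteq> UNIV \<and>
     (\<forall>J. is_ideal J \<and> M \<subseteq> J \<longrightarrow> J = M \<or> J = UNIV)"

definition radical :: "'r::comm_ring_1 set \<Rightarrow> 'r set" where
  "radical J = {a. \<exists>k. a ^ k \<in> J}"

definition is_primary_for :: "'r::comm_ring_1 set \<Rightarrow> 'r set \<Rightarrow> bool" where
  "is_primary_for J M \<longleftrightarrow> is_ideal J \<and> J \<noteq> UNIV \<and>
     (\<forall>a b. a * b \<in> J \<and> a \<notin> J \<longrightarrow> b \<in> radical J) \<and> radical J = M"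

definition spans_quot :: "('v, 'a::field) mpoly set \<Rightarrow> ('v, 'a) mpoly set \<Rightarrow> bool" where
  "spans_quot J B \<longleftrightarrow> (\<forall>p. \<exists>c. p - (\<Sum>b\<in>B. mconst (c b) * b) \<in> J)"

definition zero_dimensional :: "('v, 'a::field) mpoly set \<Rightarrow> bool" where
  "zero_dimensional J \<longleftrightarrow> is_ideal J \<and> (\<exists>B. finite B \<and> spans_quot J B)"

text \<open>Degree = vector space dimension of the quotient (size of a minimal spanning set,
  i.e. of a basis).\<close>
definition ideal_deg :: "('v, 'a::field) mpoly set \<Rightarrow> nat" where
  "ideal_deg J = (LEAST d. \<exists>B. finite B \<and> card B = d \<and> spans_quot J B)"

definition eval_upoly :: "'a::comm_ring_1 poly \<Rightarrow> ('v, 'a) mpoly \<Rightarrow> ('v, 'a) mpoly" where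
  "eval_upoly q x = poly (map_poly mconst q) x"

definition is_minpoly_mod :: "('v, 'a::field) mpoly set \<Rightarrow> ('v, 'a) mpoly \<Rightarrow> 'a poly \<Rightarrow> bool" where
  "is_minpoly_mod J x q \<longleftrightarrow> lead_coeff q = 1 \<and> eval_upoly q x \<in> J \<and>
     (\<forall>r. r \<noteq> 0 \<and> eval_upoly r x \<in> J \<longrightarrow> degree q \<le> degree r)"

definition perfect_field :: "'a::field itself \<Rightarrow> bool" where
  "perfect_field _ \<longleftrightarrow> CHAR('a) = 0 \<or> (\<forall>x::'a. \<exists>y. y ^ CHAR('a) = x)"

definition is_ring_hom :: "('a::comm_ring_1 \<Rightarrow> 'b::comm_ring_1) \<Rightarrow> bool" where
  "is_ring_hom \<phi> \<longleftrightarrow> \<phi> 0 = 0 \<and> \<phi> 1 = 1 \<and> (\<forall>x y. \<phi> (x + y) = \<phi> x + \<phi> y) \<and>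
     (\<forall>x y. \<phi> (x * y) = \<phi> x * \<phi> y)"

text \<open>(L, \<phi>, \<zeta>) presents L as K[Z]/<P> with \<zeta> the class of Z: \<phi> : K \<rightarrow> L is a
  field embedding, \<zeta> is a root of P and L = K[\<zeta>]. For irreducible P this determines
  L up to K-isomorphism.\<close>
definition is_stem_field :: "('a::field \<Rightarrow> 'b::field) \<Rightarrow> 'b \<Rightarrow> 'a poly \<Rightarrow> bool" where
  "is_stem_field \<phi> \<zeta> P \<longleftrightarrow> is_ring_hom \<phi> \<and> poly (map_poly \<phi> P) \<zeta> = 0 \<and>
     (\<forall>y. \<exists>q. y = poly (map_poly \<phi> q) \<zeta>)"

definition map_mpoly :: "('a::zero \<Rightarrow> 'b::zero) \<Rightarrow> ('v, 'a) mpoly \<Rightarrow> ('v, 'b) mpoly" where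
  "map_mpoly \<phi> p = Poly_Mapping.map \<phi> p"

end

theory Submission
  imports Defs "Jordan_Normal_Form.Char_Poly" "HOL-Library.Function_Algebras"
begin


definition spanI :: "('k \<Rightarrow> 'm \<Rightarrow> 'm) \<Rightarrow> 'm::ab_group_add set \<Rightarrow> 'i set \<Rightarrow> ('i \<Rightarrow> 'm) \<Rightarrow> bool" where
  "spanI sc J A v \<longleftrightarrow> (\<forall>p. \<exists>c. p - (\<Sum>a\<in>A. sc (c a) (v a)) \<in> J)"

definition indepI :: "('k::zero \<Rightarrow> 'm \<Rightarrow> 'm) \<Rightarrow> 'm::ab_group_add set \<Rightarrow> 'i set \<Rightarrow> ('i \<Rightarrow> 'm) \<Rightarrow> bool" where
  "indepI sc J A v \<longleftrightarrow> (\<forall>c. (\<Sum>a\<in>A. sc (c a) (v a)) \<in> J \<longrightarrow> (\<forall>a\<in>A. c a = 0))"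

definition dimJ :: "('k \<Rightarrow> 'm \<Rightarrow> 'm) \<Rightarrow> 'm::ab_group_add set \<Rightarrow> nat" where
  "dimJ sc J = (LEAST d. \<exists>B. finite B \<and> card B = d \<and> spanI sc J B (\<lambda>x. x))"

lemma sum_fun_apply: "(\<Sum>a\<in>A. g a) x = (\<Sum>a\<in>A. g a x)"
  by (induct A rule: infinite_finite_induct) auto

context vector_space begin

lemma spanI_image:
  assumes "finite A" "spanI scale J A v"
  shows "spanI scale J (v ` A) (\<lambda>x. x)"
  unfolding spanI_def
proof
  fix p
  obtain c where c: "p - (\<Sum>a\<in>A. c a *s v a) \<in> J" using assms(2) unfolding spanI_def by blast
  define c' where "c' w = (\<Sum>a\<in>{a\<in>A. v a = w}. c a)" for w
  have "(\<Sum>w\<in>v`A. c' w *s w) = (\<Sum>w\<in>v`A. \<Sum>a\<in>{a\<in>A. v a = w}. c a *s v a)"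
    unfolding c'_def scale_sum_left by (intro sum.cong) auto
  also have "\<dots> = (\<Sum>a\<in>A. c a *s v a)"
    using sum.image_gen[OF assms(1), of "\<lambda>a. c a *s v a" v] by simp
  finally show "\<exists>c. p - (\<Sum>w\<in>v`A. c w *s w) \<in> J" using c by metis
qed

lemma sum_two_support:
  assumes "finite A" "a1 \<in> A" "a2 \<in> A" "a1 \<noteq> a2" "\<And>a. a \<in> A \<Longrightarrow> a \<noteq> a1 \<Longrightarrow> a \<noteq> a2 \<Longrightarrow> g a = 0"
  shows "(\<Sum>a\<in>A. g a) = g a1 + g a2"
proof -
  have "(\<Sum>a\<in>A. g a) = (\<Sum>a\<in>{a1,a2}. g a)"
    using assms by (intro sum.mono_neutral_right) auto
  then show ?thesis using assms by simp
qed

lemma indep_card_le: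
  assumes J: "subspace J" and fA: "finite A" and iA: "indepI scale J A v"
    and fB: "finite B" and sB: "spanI scale J B (\<lambda>x. x)"
  shows "card A \<le> card B"
proof -
  interpret F: vector_space "\<lambda>(c::'a) (g::'b \<Rightarrow> 'a). (\<lambda>x. c * g x)"
    by unfold_locales (auto simp: fun_eq_iff algebra_simps)
  have "\<forall>a. \<exists>c. v a - (\<Sum>b\<in>B. c b *s b) \<in> J" using sB unfolding spanI_def by blast
  then obtain c where c: "\<And>a. v a - (\<Sum>b\<in>B. c a b *s b) \<in> J" by metis
  define w where "w a = (\<lambda>x. if x \<in> B then c a x else 0)" for a
  define \<delta> where "\<delta> b = (\<lambda>x::'b. if x = b then (1::'a) else 0)" for b
  have wsum: "w a = (\<Sum>b\<in>B. (\<lambda>x. c a b * \<delta> b x))" for a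
  proof
    fix x
    have "(\<Sum>b\<in>B. (\<lambda>x. c a b * \<delta> b x)) x = (\<Sum>b\<in>B. c a b * \<delta> b x)" by (rule sum_fun_apply)
    also have "\<dots> = (\<Sum>b\<in>B. if b = x then c a b else 0)"
      by (intro sum.cong) (auto simp: \<delta>_def)
    also have "\<dots> = w a x" using fB by (simp add: w_def)
    finally show "w a x = (\<Sum>b\<in>B. (\<lambda>x. c a b * \<delta> b x)) x" by simp
  qed
  have wspan: "w ` A \<subseteq> F.span (\<delta> ` B)"
  proof
    fix z assume "z \<in> w ` A"
    then obtain a where z: "z = w a" by blast
    show "z \<in> F.span (\<delta> ` B)" unfolding z wsum
      by (intro F.span_sum F.span_scale F.span_base) auto
  qed
  have key: "\<And>d. (\<And>b. b \<in> B \<Longrightarrow> (\<Sum>a\<in>A. d a * c a b) = 0) \<Longrightarrow> \<forall>a\<in>A. d a = 0"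
  proof -
    fix d assume h: "\<And>b. b \<in> B \<Longrightarrow> (\<Sum>a\<in>A. d a * c a b) = 0"
    have "(\<Sum>a\<in>A. d a *s (v a - (\<Sum>b\<in>B. c a b *s b))) \<in> J"
      using J by (intro subspace_sum subspace_scale c)
    also have "(\<Sum>a\<in>A. d a *s (v a - (\<Sum>b\<in>B. c a b *s b)))
       = (\<Sum>a\<in>A. d a *s v a) - (\<Sum>a\<in>A. \<Sum>b\<in>B. (d a * c a b) *s b)"
      by (simp add: scale_right_diff_distrib scale_sum_right sum_subtractf)
    also have "(\<Sum>a\<in>A. \<Sum>b\<in>B. (d a * c a b) *s b) = (\<Sum>b\<in>B. (\<Sum>a\<in>A. d a * c a b) *s b)"
      by (subst sum.swap) (simp add: scale_sum_left)
    also have "\<dots> = 0" using h by simp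
    finally have "(\<Sum>a\<in>A. d a *s v a) \<in> J" by simp
    then show "\<forall>a\<in>A. d a = 0" using iA unfolding indepI_def by blast
  qed
  have inj: "inj_on w A"
  proof (rule inj_onI, rule ccontr)
    fix a1 a2 assume a: "a1 \<in> A" "a2 \<in> A" "w a1 = w a2" "a1 \<noteq> a2"
    define d where "d a = (if a = a1 then 1 else if a = a2 then -1 else (0::'a))" for a
    have "c a1 b = c a2 b" if "b \<in> B" for b
      using fun_cong[OF a(3), of b] that by (simp add: w_def)
    then have "(\<Sum>a\<in>A. d a * c a b) = 0" if "b \<in> B" for b
      using that a fA by (subst sum_two_support[of A a1 a2]) (auto simp: d_def)
    then have "\<forall>a\<in>A. d a = 0" by (rule key)
    then show False using a by (auto simp: d_def)
  qed
  have indep: "F.independent (w ` A)"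
  proof (rule F.independent_if_scalars_zero)
    show "finite (w ` A)" using fA by simp
    fix f z assume h: "(\<Sum>x\<in>w ` A. (\<lambda>y. f x * x y)) = 0" and z: "z \<in> w ` A"
    have h2: "(\<Sum>a\<in>A. (\<lambda>y. f (w a) * w a y)) = 0"
      using h by (simp add: sum.reindex[OF inj])
    have "(\<Sum>a\<in>A. f (w a) * c a b) = 0" if "b \<in> B" for b
    proof -
      have "(\<Sum>a\<in>A. (\<lambda>y. f (w a) * w a y)) b = 0" using h2 by simp
      then show ?thesis using that by (simp add: sum_fun_apply w_def)
    qed
    then have "\<forall>a\<in>A. f (w a) = 0" by (rule key)
    then show "f z = 0" using z by auto
  qed
  have "card (w ` A) \<le> card (\<delta> ` B)"
    using F.independent_span_bound[OF _ indep wspan] fB by auto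
  also have "\<dots> \<le> card B" using fB by (rule card_image_le)
  finally show ?thesis using card_image[OF inj] by simp
qed

lemma dimJ_eq:
  assumes J: "subspace J" and fA: "finite A" and sA: "spanI scale J A v" and iA: "indepI scale J A v"
  shows "dimJ scale J = card A"
proof -
  let ?P = "\<lambda>d. \<exists>B. finite B \<and> card B = d \<and> spanI scale J B (\<lambda>x. x)"
  have "?P (card (v ` A))" using spanI_image[OF fA sA] fA by blast
  then have le: "dimJ scale J \<le> card (v ` A)" unfolding dimJ_def by (rule Least_le)
  have "?P (dimJ scale J)" unfolding dimJ_def by (rule LeastI) fact
  then obtain B where B: "finite B" "card B = dimJ scale J" "spanI scale J B (\<lambda>x. x)" by blast
  have "card A \<le> card B" by (rule indep_card_le[OF J fA iA B(1) B(3)])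
  moreover have "card (v ` A) \<le> card A" using fA by (rule card_image_le)
  ultimately show ?thesis using le B(2) by linarith
qed

lemma basis_exists_J:
  assumes J: "subspace J" and "finite B" and "spanI scale J B (\<lambda>x. x)"
  shows "\<exists>B'. finite B' \<and> spanI scale J B' (\<lambda>x. x) \<and> indepI scale J B' (\<lambda>x. x)"
  using assms(2,3)
proof (induct "card B" arbitrary: B rule: less_induct)
  case less
  show ?case
  proof (cases "indepI scale J B (\<lambda>x. x)")
    case True then show ?thesis using less by blast
  next
    case False
    then obtain c b0 where c: "(\<Sum>b\<in>B. c b *s b) \<in> J" and b0: "b0 \<in> B" "c b0 \<noteq> 0"
      unfolding indepI_def by blast
    have "spanI scale J (B - {b0}) (\<lambda>x. x)"
      unfolding spanI_def
    proof
      fix p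
      obtain d where d: "p - (\<Sum>b\<in>B. d b *s b) \<in> J" using less(3) unfolding spanI_def by blast
      define d' where "d' b = d b - d b0 * c b / c b0" for b
      have eq: "p - (\<Sum>b\<in>B - {b0}. d' b *s b) = (p - (\<Sum>b\<in>B. d b *s b)) + (d b0 / c b0) *s (\<Sum>b\<in>B. c b *s b)"
      proof -
        have s1: "(\<Sum>b\<in>B. d b *s b) = d b0 *s b0 + (\<Sum>b\<in>B - {b0}. d b *s b)"
          using less(2) b0 by (simp add: sum.remove)
        have s2: "(\<Sum>b\<in>B. c b *s b) = c b0 *s b0 + (\<Sum>b\<in>B - {b0}. c b *s b)"
          using less(2) b0 by (simp add: sum.remove)
        have s3: "(\<Sum>b\<in>B - {b0}. d' b *s b) = (\<Sum>b\<in>B - {b0}. d b *s b) - (d b0 / c b0) *s (\<Sum>b\<in>B - {b0}. c b *s b)"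
          by (simp add: d'_def scale_left_diff_distrib sum_subtractf scale_sum_right)
        show ?thesis unfolding s1 s2 s3 using b0
          by (simp add: scale_right_distrib algebra_simps)
      qed
      have "p - (\<Sum>b\<in>B - {b0}. d' b *s b) \<in> J"
        unfolding eq using J d c by (intro subspace_add subspace_scale)
      then show "\<exists>c. p - (\<Sum>b\<in>B - {b0}. c b *s b) \<in> J" by blast
    qed
    moreover have "card (B - {b0}) < card B" using less(2) b0 by (meson card_Diff1_less)
    ultimately show ?thesis using less(1)[of "B - {b0}"] less(2) by blast
  qed
qed

end




lemma mconst_hom: "comm_ring_hom (mconst :: 'a::comm_ring_1 \<Rightarrow> ('v, 'a) mpoly)"
  by unfold_locales (auto simp: mconst_def single_add mult_single)

interpretation mc: comm_ring_hom "mconst :: 'a::comm_ring_1 \<Rightarrow> ('v, 'a) mpoly"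
  by (rule mconst_hom)

lemma lookup_map0: "f 0 = 0 \<Longrightarrow> Poly_Mapping.lookup (Poly_Mapping.map f p) k = f (Poly_Mapping.lookup p k)"
  by (simp add: Poly_Mapping.map.rep_eq when_def)

lemma lookup_mconst_mult: "Poly_Mapping.lookup (mconst c * p) k = c * Poly_Mapping.lookup p k"
  unfolding mconst_def mult_map_scale_conv_mult[symmetric] by (simp add: lookup_map0)

lemma mconst_inj: "mconst c = (mconst d :: ('v, 'a::comm_ring_1) mpoly) \<longleftrightarrow> c = d"
  unfolding mconst_def by (metis lookup_single_eq)

lemma update_eq_add: "k \<notin> Poly_Mapping.keys f \<Longrightarrow> Poly_Mapping.update k v f = f + Poly_Mapping.single k v"
  by (rule poly_mapping_eqI) (auto simp: lookup_update lookup_add lookup_single in_keys_iff when_def)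

lemma pm_induct:
  assumes "P 0" "\<And>f k v. P f \<Longrightarrow> P (f + Poly_Mapping.single k v)"
  shows "P p"
proof (induct p rule: Poly_Mapping.update_induct)
  case const then show ?case using assms(1) .
next
  case (update f a b) then show ?case using assms(2) update_eq_add by metis
qed

lemma is_ring_hom_field_hom: "is_ring_hom (\<phi> :: 'a::field \<Rightarrow> 'b::field) \<Longrightarrow> field_hom \<phi>"
  unfolding is_ring_hom_def by unfold_locales auto

lemma map_mpoly_add: "is_ring_hom \<phi> \<Longrightarrow> map_mpoly \<phi> (p + q) = map_mpoly \<phi> p + map_mpoly \<phi> q"
  unfolding map_mpoly_def is_ring_hom_def
  by (rule poly_mapping_eqI) (simp add: lookup_map0 lookup_add)

lemma map_mpoly_single: "is_ring_hom \<phi> \<Longrightarrow> map_mpoly \<phi> (Poly_Mapping.single k v) = Poly_Mapping.single k (\<phi> v)"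
  unfolding map_mpoly_def is_ring_hom_def by simp

lemma map_mpoly_zero: "map_mpoly \<phi> 0 = 0"
  unfolding map_mpoly_def by (rule poly_mapping_eqI) (simp add: Poly_Mapping.map.rep_eq)

lemma map_mpoly_mult_single:
  assumes h: "is_ring_hom \<phi>"
  shows "map_mpoly \<phi> (Poly_Mapping.single a b * q) = Poly_Mapping.single a (\<phi> b) * map_mpoly \<phi> q"
proof (induct q rule: pm_induct)
  case 1 then show ?case by (simp add: map_mpoly_zero)
next
  case (2 f k v)
  have "map_mpoly \<phi> (Poly_Mapping.single a b * (f + Poly_Mapping.single k v))
      = map_mpoly \<phi> (Poly_Mapping.single a b * f) + map_mpoly \<phi> (Poly_Mapping.single (a + k) (b * v))"
    by (simp add: distrib_left mult_single map_mpoly_add[OF h])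
  also have "\<dots> = Poly_Mapping.single a (\<phi> b) * map_mpoly \<phi> f + Poly_Mapping.single (a + k) (\<phi> b * \<phi> v)"
    using 2 h by (simp add: map_mpoly_single is_ring_hom_def)
  also have "\<dots> = Poly_Mapping.single a (\<phi> b) * map_mpoly \<phi> (f + Poly_Mapping.single k v)"
    by (simp add: map_mpoly_add[OF h] map_mpoly_single[OF h] distrib_left mult_single)
  finally show ?case .
qed

lemma map_mpoly_hom:
  assumes h: "is_ring_hom (\<phi> :: 'a::comm_ring_1 \<Rightarrow> 'b::comm_ring_1)"
  shows "comm_ring_hom (map_mpoly \<phi> :: ('v, 'a) mpoly \<Rightarrow> ('v, 'b) mpoly)"
proof
  fix p q :: "('v, 'a) mpoly"
  show "map_mpoly \<phi> (p + q) = map_mpoly \<phi> p + map_mpoly \<phi> q" by (rule map_mpoly_add[OF h])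
  show "map_mpoly \<phi> 1 = 1"
    using map_mpoly_single[OF h, of 0 1] h by (simp add: is_ring_hom_def)
  show "map_mpoly \<phi> (p * q) = map_mpoly \<phi> p * map_mpoly \<phi> q"
  proof (induct p rule: pm_induct)
    case 1 then show ?case by (simp add: map_mpoly_zero)
  next
    case (2 f k v)
    then show ?case
      by (simp add: distrib_right map_mpoly_add[OF h] map_mpoly_mult_single[OF h] map_mpoly_single[OF h])
  qed
qed (simp add: map_mpoly_zero)

lemma lookup_map_mpoly: "is_ring_hom \<phi> \<Longrightarrow> Poly_Mapping.lookup (map_mpoly \<phi> p) k = \<phi> (Poly_Mapping.lookup p k)"
  unfolding map_mpoly_def is_ring_hom_def by (simp add: lookup_map0)

lemma map_mpoly_mconst: "is_ring_hom \<phi> \<Longrightarrow> map_mpoly \<phi> (mconst c) = mconst (\<phi> c)"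
  unfolding mconst_def by (rule map_mpoly_single)

lemma map_mpoly_mvar: "is_ring_hom \<phi> \<Longrightarrow> map_mpoly \<phi> (mvar v) = mvar v"
  unfolding mvar_def by (simp add: map_mpoly_single is_ring_hom_def)

lemma map_mpoly_inj:
  assumes "is_ring_hom (\<phi> :: 'a::field \<Rightarrow> 'b::field)"
  shows "inj (map_mpoly \<phi> :: ('v, 'a) mpoly \<Rightarrow> ('v, 'b) mpoly)"
proof (rule injI)
  interpret field_hom \<phi> by (rule is_ring_hom_field_hom[OF assms])
  fix p q :: "('v, 'a) mpoly" assume "map_mpoly \<phi> p = map_mpoly \<phi> q"
  then show "p = q"
    by (intro poly_mapping_eqI) (metis lookup_map_mpoly[OF assms] hom_0_iff hom_minus right_minus_eq)
qed

lemma vs_mconst: "vector_space (\<lambda>c (p::('v, 'a::field) mpoly). mconst c * p)"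
  by unfold_locales (simp_all add: algebra_simps mc.hom_add mc.hom_mult)

lemma vs_mconst_hom:
  assumes "is_ring_hom (\<phi> :: 'a::field \<Rightarrow> 'b::field)"
  shows "vector_space (\<lambda>c (p::('v, 'b) mpoly). mconst (\<phi> c) * p)"
proof -
  interpret field_hom \<phi> by (rule is_ring_hom_field_hom[OF assms])
  show ?thesis by unfold_locales (simp_all add: algebra_simps mc.hom_add mc.hom_mult hom_add hom_mult)
qed

subsection \<open>Ideals\<close>

lemma ideal_0: "is_ideal J \<Longrightarrow> 0 \<in> J" unfolding is_ideal_def by blast
lemma ideal_add: "is_ideal J \<Longrightarrow> a \<in> J \<Longrightarrow> b \<in> J \<Longrightarrow> a + b \<in> J" unfolding is_ideal_def by blast
lemma ideal_mult: "is_ideal J \<Longrightarrow> a \<in> J \<Longrightarrow> r * a \<in> J" unfolding is_ideal_def by blast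
lemma ideal_mult2: "is_ideal J \<Longrightarrow> a \<in> J \<Longrightarrow> a * r \<in> J" unfolding is_ideal_def by (metis mult.commute)
lemma ideal_uminus: "is_ideal J \<Longrightarrow> a \<in> J \<Longrightarrow> - a \<in> J"
  using ideal_mult[of J a "-1"] by simp
lemma ideal_diff: "is_ideal J \<Longrightarrow> a \<in> J \<Longrightarrow> b \<in> J \<Longrightarrow> a - b \<in> J"
  using ideal_add[of J a "-b"] ideal_uminus[of J b] by simp
lemma ideal_sum: "is_ideal J \<Longrightarrow> (\<And>x. x \<in> A \<Longrightarrow> g x \<in> J) \<Longrightarrow> sum g A \<in> J"
  by (induct A rule: infinite_finite_induct) (auto intro: ideal_0 ideal_add)

lemma ideal_subspace:
  assumes "is_ring_hom (\<phi> :: 'a::field \<Rightarrow> 'b::field)" "is_ideal (J :: ('v, 'b) mpoly set)"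
  shows "module.subspace (\<lambda>c p. mconst (\<phi> c) * p) J"
proof -
  have "Modules.module (\<lambda>c (p::('v, 'b) mpoly). mconst (\<phi> c) * p)"
    using vs_mconst_hom[OF assms(1)] module_iff_vector_space by blast
  then show ?thesis using assms(2) by (auto simp: module.subspace_def intro: ideal_0 ideal_add ideal_mult)
qed

lemma ideal_subspace':
  assumes "is_ideal (J :: ('v, 'a::field) mpoly set)"
  shows "module.subspace (\<lambda>c p. mconst c * p) J"
proof -
  have "Modules.module (\<lambda>c (p::('v, 'a) mpoly). mconst c * p)"
    using vs_mconst module_iff_vector_space by blast
  then show ?thesis using assms by (auto simp: module.subspace_def intro: ideal_0 ideal_add ideal_mult)
qed

lemma ideal_gen_ideal: "is_ideal (ideal_gen S)"
  unfolding ideal_gen_def is_ideal_def by auto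

lemma ideal_gen_sub: "S \<subseteq> ideal_gen S"
  unfolding ideal_gen_def by auto

lemma ideal_gen_least: "is_ideal J \<Longrightarrow> S \<subseteq> J \<Longrightarrow> ideal_gen S \<subseteq> J"
  unfolding ideal_gen_def by auto

lemma cong_power:
  assumes "is_ideal J" "x - z \<in> J"
  shows "x ^ n - z ^ n \<in> J"
proof (induct n)
  case 0 then show ?case using assms by (simp add: ideal_0)
next
  case (Suc n)
  have "x ^ Suc n - z ^ Suc n = x * (x ^ n - z ^ n) + z ^ n * (x - z)"
    by (simp add: algebra_simps)
  then show ?case using Suc assms by (metis ideal_add ideal_mult)
qed

lemma cong_poly:
  assumes "is_ideal J" "x - z \<in> J"
  shows "poly Q x - poly Q z \<in> J"
proof (induct Q)
  case 0 then show ?case using assms by (simp add: ideal_0)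
next
  case (pCons a Q)
  have "poly (pCons a Q) x - poly (pCons a Q) z = x * (poly Q x - poly Q z) + poly Q z * (x - z)"
    by (simp add: algebra_simps)
  then show ?case using pCons assms by (metis ideal_add ideal_mult)
qed

lemma ideal_UNIV: "is_ideal J \<Longrightarrow> 1 \<in> J \<Longrightarrow> J = UNIV"
  using ideal_mult[of J 1] by auto




lemma bezout_irred:
  fixes P q :: "'a::field poly"
  assumes irr: "irreducible P" and nd: "\<not> P dvd q"
  shows "\<exists>u v. u * P + v * q = 1"
proof -
  define S where "S = {u * P + v * q | u v. True}"
  have P0: "P \<noteq> 0" using irr by auto
  have PS: "P \<in> S" unfolding S_def by (rule CollectI, rule exI[of _ 1], rule exI[of _ 0]) simp
  define n where "n = (LEAST n. \<exists>g. g \<in> S \<and> g \<noteq> 0 \<and> degree g = n)"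
  have "\<exists>g. g \<in> S \<and> g \<noteq> 0 \<and> degree g = n"
    unfolding n_def by (rule LeastI[of _ "degree P"]) (use PS P0 in blast)
  then obtain g where g: "g \<in> S" "g \<noteq> 0" "degree g = n" by blast
  have min: "h = 0" if "h \<in> S" "degree h < n" for h
  proof (rule ccontr)
    assume "h \<noteq> 0"
    then have "n \<le> degree h" unfolding n_def by (intro Least_le) (use that in blast)
    then show False using that by simp
  qed
  obtain u0 v0 where g_eq: "g = u0 * P + v0 * q" using g(1) unfolding S_def by blast
  have modS: "x mod g \<in> S" if xS: "x \<in> S" for x
  proof -
    obtain u v where x: "x = u * P + v * q" using xS unfolding S_def by blast
    have "x mod g = x - (x div g) * g" by (simp add: minus_div_mult_eq_mod)
    also have "\<dots> = (u - (x div g) * u0) * P + (v - (x div g) * v0) * q"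
      unfolding x g_eq by (simp add: algebra_simps)
    finally show ?thesis unfolding S_def by blast
  qed
  have dvd: "g dvd x" if "x \<in> S" for x
  proof -
    have "x mod g = 0"
      using degree_mod_less[OF g(2), of x] min[OF modS[OF that]] g(3) by auto
    then show ?thesis by (simp add: mod_eq_0_iff_dvd)
  qed
  have qS: "q \<in> S" unfolding S_def by (rule CollectI, rule exI[of _ 0], rule exI[of _ 1]) simp
  obtain h where Ph: "P = g * h" using dvd[OF PS] by blast
  have "is_unit g"
  proof (rule ccontr)
    assume "\<not> is_unit g"
    then have "is_unit h" using irreducibleD[OF irr Ph] by blast
    then obtain k where k: "1 = h * k" by (rule dvdE)
    then have "g = P * k" using Ph by (metis mult.assoc mult_1_right)
    then have "P dvd g" by simp
    then have "P dvd q" using dvd[OF qS] by (rule dvd_trans)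
    then show False using nd by blast
  qed
  then obtain k where k: "1 = g * k" by (rule dvdE)
  have "(k * u0) * P + (k * v0) * q = 1" using k g_eq by (simp add: algebra_simps)
  then show ?thesis by blast
qed

lemma degree_pderiv_le: "degree (pderiv p) \<le> degree p - 1"
  by (rule degree_le) (auto simp: coeff_pderiv coeff_eq_0)

lemma irreducible_degree_pos: "irreducible (P :: 'a::field poly) \<Longrightarrow> degree P > 0"
  using is_unit_iff_degree[of P] by (auto simp: irreducible_def)

lemma coeff_sum_monom_scaled:
  fixes c :: "nat \<Rightarrow> 'a::comm_semiring_1"
  assumes "k > 0" "finite A"
  shows "coeff (\<Sum>j\<in>A. monom (c j) (k * j)) m = (if k dvd m \<and> m div k \<in> A then c (m div k) else 0)"
proof -
  have "coeff (\<Sum>j\<in>A. monom (c j) (k * j)) m = (\<Sum>j\<in>A. if k * j = m then c j else 0)"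
    by (simp add: coeff_sum coeff_monom)
  also have "\<dots> = (if k dvd m \<and> m div k \<in> A then c (m div k) else 0)"
  proof (cases "k dvd m")
    case True
    then obtain j0 where m: "m = k * j0" by blast
    have "(\<Sum>j\<in>A. if k * j = m then c j else 0) = (\<Sum>j\<in>A. if j = j0 then c j else 0)"
      using assms(1) by (intro sum.cong) (auto simp: m)
    also have "\<dots> = (if j0 \<in> A then c j0 else 0)" using assms(2) by simp
    finally show ?thesis using m assms(1) by simp
  next
    case False
    then have "(\<Sum>j\<in>A. if k * j = m then c j else 0) = 0"
      by (intro sum.neutral) auto
    then show ?thesis using False by simp
  qed
  finally show ?thesis .
qed

lemma perfect_separable:
  fixes P :: "'a::field poly"
  assumes perf: "perfect_field TYPE('a)" and irr: "irreducible P"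
  shows "\<not> P dvd pderiv P"
proof
  assume dv: "P dvd pderiv P"
  have degP: "degree P > 0" using irreducible_degree_pos[OF irr] .
  have pd0: "pderiv P = 0"
  proof (rule ccontr)
    assume "pderiv P \<noteq> 0"
    then have "degree P \<le> degree (pderiv P)" using dvd_imp_degree_le[OF dv] by blast
    then show False using degree_pderiv_le[of P] degP by linarith
  qed
  have cz: "of_nat m * coeff P m = 0" if m0: "m > 0" for m
  proof -
    obtain n where "m = Suc n" using m0 by (cases m) auto
    then show ?thesis using arg_cong[OF pd0, of "\<lambda>p. coeff p n"] by (simp add: coeff_pderiv)
  qed
  have cdvd: "CHAR('a) dvd m" if "coeff P m \<noteq> 0" "m > 0" for m
    using cz[OF that(2)] that(1) of_nat_eq_0_iff_char_dvd by auto
  show False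
  proof (cases "CHAR('a) = 0")
    case True
    have "coeff P (degree P) \<noteq> 0" using irr by auto
    then have "CHAR('a) dvd degree P" using cdvd degP by blast
    then show False using True degP by simp
  next
    case False
    define p where "p = CHAR('a)"
    have pp: "prime p" unfolding p_def using False prime_CHAR_semidom by auto
    then have p1: "p > 1" by (rule prime_gt_1_nat)
    have roots: "\<forall>x::'a. \<exists>y. y ^ p = x" using perf False unfolding perfect_field_def p_def by auto
    from choice[OF roots] obtain r where r0: "\<forall>x::'a. r x ^ p = x" by blast
    have r: "\<And>x::'a. r x ^ p = x" using r0 by blast
    define Q where "Q = (\<Sum>j\<le>degree P. monom (r (coeff P (p * j))) j)"
    have "Q ^ p = (\<Sum>j\<le>degree P. monom (r (coeff P (p * j))) j ^ p)"
      unfolding Q_def by (rule freshmans_dream_sum) (use pp in \<open>simp_all add: p_def\<close>)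
    also have "\<dots> = (\<Sum>j\<le>degree P. monom (coeff P (p * j)) (p * j))"
      by (simp add: monom_power r mult_ac)
    also have "\<dots> = P"
    proof (rule poly_eqI)
      fix m
      have "coeff (\<Sum>j\<le>degree P. monom (coeff P (p * j)) (p * j)) m
          = (if p dvd m \<and> m div p \<in> {..degree P} then coeff P (p * (m div p)) else 0)"
        using p1 by (intro coeff_sum_monom_scaled) auto
      also have "\<dots> = coeff P m"
      proof (cases "p dvd m")
        case True
        then obtain j where m: "m = p * j" by blast
        show ?thesis
        proof (cases "j \<le> degree P")
          case True then show ?thesis using m p1 by simp
        next
          case False
          then have "m > degree P" using m p1
          proof -
            have "j \<le> m" using m p1 by simp
            then show ?thesis using False by linarith
          qed
          then show ?thesis using m p1 False by (simp add: coeff_eq_0)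
        qed
      next
        case False
        then have "coeff P m = 0"
          using cdvd[of m] by (cases "m = 0") (auto simp: p_def)
        then show ?thesis using False by simp
      qed
      finally show "coeff (\<Sum>j\<le>degree P. monom (coeff P (p * j)) (p * j)) m = coeff P m" .
    qed
    finally have PQ: "P = Q ^ p" by simp
    have "P = Q * Q ^ (p - 1)" proof -
      have "p = Suc (p - 1)" using p1 by simp
      then have "Q ^ p = Q * Q ^ (p - 1)" by (metis power_Suc)
      then show ?thesis unfolding PQ .
    qed
    then have "is_unit Q \<or> is_unit (Q ^ (p - 1))" using irreducibleD[OF irr] by blast
    moreover have "p - 1 \<noteq> 0" using p1 by simp
    ultimately have uQ: "is_unit Q"
    proof (elim disjE)
      assume "is_unit (Q ^ (p - 1))" "p - 1 \<noteq> 0"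
      then show "is_unit Q" using iffD1[OF is_unit_power_iff[of Q "p - 1"]] by auto
    qed
    have "is_unit (Q ^ p)" using iffD2[OF is_unit_power_iff[of Q p]] uQ by auto
    then have "is_unit P" using PQ by (simp only:)
    then show False using irreducible_not_unit[OF irr] by blast
  qed
qed

lemma poly_sum_lessThan: "degree p < n \<Longrightarrow> poly p x = (\<Sum>j<n. coeff p j * x ^ j)"
  for p :: "'a::comm_semiring_1 poly"
  unfolding poly_altdef by (intro sum.mono_neutral_left) (auto simp: coeff_eq_0)

context
  fixes \<phi> :: "'a::field \<Rightarrow> 'b::field" and \<zeta> :: 'b and P :: "'a poly"
  assumes stem: "is_stem_field \<phi> \<zeta> P" and irr: "irreducible P"
begin

lemma stem_hom: "is_ring_hom \<phi>" using stem by (simp add: is_stem_field_def)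

interpretation fh: field_hom \<phi> by (rule is_ring_hom_field_hom[OF stem_hom])
interpretation mph: map_poly_comm_ring_hom \<phi> ..

lemma stem_root: "poly (map_poly \<phi> P) \<zeta> = 0" using stem by (simp add: is_stem_field_def)

lemma stem_root_iff: "poly (map_poly \<phi> q) \<zeta> = 0 \<longleftrightarrow> P dvd q"
proof
  assume "P dvd q"
  then obtain r where "q = P * r" by blast
  then show "poly (map_poly \<phi> q) \<zeta> = 0" by (simp add: mph.hom_mult stem_root)
next
  assume h: "poly (map_poly \<phi> q) \<zeta> = 0"
  show "P dvd q"
  proof (rule ccontr)
    assume "\<not> P dvd q"
    then obtain u v where "u * P + v * q = 1" using bezout_irred[OF irr] by blast
    then have "poly (map_poly \<phi> (u * P + v * q)) \<zeta> = 1" by simp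
    then show False by (simp add: mph.hom_add mph.hom_mult stem_root h)
  qed
qed

lemma stem_small_zero:
  assumes "degree q < degree P" "poly (map_poly \<phi> q) \<zeta> = 0"
  shows "q = 0"
proof (rule ccontr)
  assume "q \<noteq> 0"
  moreover have "P dvd q" using stem_root_iff assms(2) by (rule iffD1)
  ultimately have "degree P \<le> degree q" using dvd_imp_degree_le by blast
  then show False using assms(1) by linarith
qed

lemma stem_surj: "\<exists>q. y = poly (map_poly \<phi> q) \<zeta>"
  using stem by (simp add: is_stem_field_def)

lemma stem_basis_span: "\<exists>k. y = (\<Sum>j<degree P. \<phi> (k j) * \<zeta> ^ j)"
proof -
  obtain q where q: "y = poly (map_poly \<phi> q) \<zeta>" using stem_surj by blast
  define r where "r = q mod P"
  have P0: "P \<noteq> 0" using irr by auto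
  have "q = (q div P) * P + r" unfolding r_def by simp
  then have "poly (map_poly \<phi> q) \<zeta> = poly (map_poly \<phi> ((q div P) * P + r)) \<zeta>" by simp
  also have "\<dots> = poly (map_poly \<phi> r) \<zeta>" by (simp add: mph.hom_add mph.hom_mult stem_root)
  finally have "poly (map_poly \<phi> q) \<zeta> = poly (map_poly \<phi> r) \<zeta>" .
  then have y: "y = poly (map_poly \<phi> r) \<zeta>" using q by simp
  have dr: "degree r < degree P"
    using degree_mod_less[OF P0, of q] irreducible_degree_pos[OF irr] unfolding r_def by auto
  have "degree (map_poly \<phi> r) < degree P" using dr degree_map_poly_le[of \<phi> r] by linarith
  then have "y = (\<Sum>j<degree P. coeff (map_poly \<phi> r) j * \<zeta> ^ j)"
    unfolding y by (rule poly_sum_lessThan)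
  also have "\<dots> = (\<Sum>j<degree P. \<phi> (coeff r j) * \<zeta> ^ j)" by simp
  finally show ?thesis by blast
qed

lemma stem_basis_indep:
  assumes "(\<Sum>j<degree P. \<phi> (k j) * \<zeta> ^ j) = 0"
  shows "\<forall>j<degree P. k j = 0"
proof -
  define q where "q = (\<Sum>j<degree P. monom (k j) j)"
  have dq: "degree q < degree P"
  proof -
    have "degree q \<le> degree P - 1" unfolding q_def
      by (intro degree_sum_le) (auto simp: degree_monom_le intro: order.trans[OF degree_monom_le])
    then show ?thesis using irreducible_degree_pos[OF irr] by linarith
  qed
  have "poly (map_poly \<phi> q) \<zeta> = (\<Sum>j<degree P. \<phi> (k j) * \<zeta> ^ j)"
    unfolding q_def by (simp add: mph.hom_sum poly_sum poly_monom)
  then have "q = 0" using stem_small_zero[OF dq] assms by simp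
  then have "coeff q j = 0" for j by simp
  then have h: "(if j < degree P then k j else 0) = 0" for j unfolding q_def by (simp add: coeff_sum coeff_monom)
  show ?thesis
  proof (intro allI impI)
    fix j assume "j < degree P"
    with h[of j] show "k j = 0" by simp
  qed
qed

end




lemma poly_taylor_hom:
  fixes Q :: "'a::field poly" and h :: "'a \<Rightarrow> 'r::comm_ring_1"
  assumes hom: "comm_ring_hom h"
  shows "\<exists>r. poly (map_poly h Q) (x + y) = poly (map_poly h Q) x + poly (map_poly h (pderiv Q)) x * y + y ^ 2 * r"
proof -
  interpret comm_ring_hom h by (rule hom)
  show ?thesis
  proof (induct Q)
    case 0 then show ?case by (intro exI[of _ 0]) simp
  next
    case (pCons a Q)
    then obtain r where r: "poly (map_poly h Q) (x + y) = poly (map_poly h Q) x + poly (map_poly h (pderiv Q)) x * y + y ^ 2 * r" by blast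
    have "poly (map_poly h (pCons a Q)) (x + y) = poly (map_poly h (pCons a Q)) x + poly (map_poly h (pderiv (pCons a Q))) x * y
        + y ^ 2 * (x * r + poly (map_poly h (pderiv Q)) x + y * r)"
      by (simp add: pderiv_pCons map_poly_pCons_hom map_poly_hom_add r algebra_simps power2_eq_square)
    then show ?case by blast
  qed
qed

lemma newton_step:
  fixes I :: "'r::comm_ring_1 set" and Pm Dm u v :: "'r poly"
  assumes I: "is_ideal I" and bez: "u * Dm + v * Pm = 1"
    and tay: "\<And>x h. \<exists>r. poly Pm (x + h) = poly Pm x + poly Dm x * h + h ^ 2 * r"
  shows "\<exists>t w w'. poly Pm t - (poly Pm y) ^ Suc m * w \<in> I \<and> y - t - poly Pm y * w' \<in> I"
proof (induct m)
  case 0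
  have "poly Pm y - poly Pm y ^ Suc 0 * 1 \<in> I \<and> y - y - poly Pm y * 0 \<in> I"
    using ideal_0[OF I] by simp
  then show ?case by blast
next
  case (Suc m)
  define A where "A = poly Pm y"
  obtain t w w' where tw: "poly Pm t - A ^ Suc m * w \<in> I" "y - t - A * w' \<in> I"
    using Suc unfolding A_def by blast
  define T where "T = poly Pm t"
  define U where "U = poly u t"
  define V where "V = poly v t"
  define D where "D = poly Dm t"
  have UDV: "U * D + V * T = 1"
    using arg_cong[OF bez, of "\<lambda>q. poly q t"] unfolding U_def V_def D_def T_def by simp
  obtain r where r: "poly Pm (t + (- (T * U))) = poly Pm t + poly Dm t * (- (T * U)) + (- (T * U)) ^ 2 * r"
    using tay by blast
  define K where "K = V + U ^ 2 * r"
  have PT': "poly Pm (t - T * U) = T ^ 2 * K"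
  proof -
    have "poly Pm (t - T * U) = T + D * (- (T * U)) + (T * U) ^ 2 * r"
      using r unfolding T_def D_def by simp
    also have "\<dots> = T * (1 - U * D) + T ^ 2 * U ^ 2 * r" by (simp add: algebra_simps power2_eq_square)
    also have "1 - U * D = V * T" using UDV by (simp add: algebra_simps)
    finally show ?thesis unfolding K_def by (simp add: algebra_simps power2_eq_square)
  qed
  define B where "B = A ^ Suc m * w"
  have TB: "T - B \<in> I" using tw(1) unfolding T_def B_def .
  have "T ^ 2 - B ^ 2 = (T - B) * (T + B)" by (simp add: algebra_simps power2_eq_square)
  then have T2: "T ^ 2 - B ^ 2 \<in> I" using TB I by (metis ideal_mult2)
  have "poly Pm (t - T * U) - A ^ Suc (Suc m) * (A ^ m * w ^ 2 * K) = (T ^ 2 - B ^ 2) * K"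
    unfolding PT' B_def by (simp add: algebra_simps power2_eq_square)
  then have c1: "poly Pm (t - T * U) - A ^ Suc (Suc m) * (A ^ m * w ^ 2 * K) \<in> I"
    using T2 I by (metis ideal_mult2)
  have "y - (t - T * U) - A * (w' + A ^ m * w * U) = (y - t - A * w') + (T - B) * U"
    unfolding B_def by (simp add: algebra_simps)
  then have c2: "y - (t - T * U) - A * (w' + A ^ m * w * U) \<in> I"
    using tw(2) TB I by (metis ideal_add ideal_mult2)
  show ?case using c1 c2 unfolding A_def by blast
qed

lemma newton:
  fixes I :: "'r::comm_ring_1 set" and Pm Dm u v :: "'r poly"
  assumes I: "is_ideal I" and bez: "u * Dm + v * Pm = 1"
    and tay: "\<And>x h. \<exists>r. poly Pm (x + h) = poly Pm x + poly Dm x * h + h ^ 2 * r"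
    and e: "e > 0" and Ae: "(poly Pm y) ^ e \<in> I"
  shows "\<exists>t w'. poly Pm t \<in> I \<and> (y - t) ^ e \<in> I \<and> y - t - poly Pm y * w' \<in> I"
proof -
  obtain m where m: "e = Suc m" using e by (cases e) auto
  obtain t w w' where tw: "poly Pm t - (poly Pm y) ^ e * w \<in> I" "y - t - poly Pm y * w' \<in> I"
    using newton_step[OF I bez tay, of y m] m by blast
  have "(poly Pm y) ^ e * w \<in> I" using Ae I by (metis ideal_mult2)
  then have Pt: "poly Pm t \<in> I" using tw(1) I by (metis diff_add_cancel ideal_add)
  have c1: "(y - t) ^ e - (poly Pm y * w') ^ e \<in> I" using tw(2) I by (intro cong_power) (simp_all add: algebra_simps)
  have c2: "(poly Pm y * w') ^ e \<in> I" using Ae I by (metis ideal_mult2 power_mult_distrib)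
  have "(y - t) ^ e \<in> I" using ideal_add[OF I c1 c2] by simp
  with Pt tw(2) show ?thesis by blast
qed




interpretation mmc: map_poly_comm_ring_hom "mconst :: 'a::comm_ring_1 \<Rightarrow> ('v, 'a) mpoly" ..

lemma mconst_phi_hom: "is_ring_hom (\<phi> :: 'a::field \<Rightarrow> 'b::field) \<Longrightarrow> comm_ring_hom (\<lambda>c. mconst (\<phi> c) :: ('v, 'b) mpoly)"
  unfolding is_ring_hom_def by unfold_locales (auto simp: mc.hom_add mc.hom_mult)

lemma map_poly_mconst_phi:
  assumes h: "is_ring_hom (\<phi> :: 'a::field \<Rightarrow> 'b::field)"
  shows "map_poly (map_mpoly \<phi>) (map_poly mconst q :: ('v, 'a) mpoly poly) = map_poly (\<lambda>c. mconst (\<phi> c)) q"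
    and "map_poly mconst (map_poly \<phi> q) = (map_poly (\<lambda>c. mconst (\<phi> c)) q :: ('v, 'b) mpoly poly)"
proof -
  have p0: "\<phi> 0 = 0" using h by (simp add: is_ring_hom_def)
  show "map_poly (map_mpoly \<phi>) (map_poly mconst q :: ('v, 'a) mpoly poly) = map_poly (\<lambda>c. mconst (\<phi> c)) q"
    by (subst map_poly_map_poly) (auto simp: map_mpoly_zero map_mpoly_mconst[OF h] o_def)
  show "map_poly mconst (map_poly \<phi> q) = (map_poly (\<lambda>c. mconst (\<phi> c)) q :: ('v, 'b) mpoly poly)"
    by (subst map_poly_map_poly) (auto simp: p0 o_def)
qed

lemma poly_mconst: "poly (map_poly mconst R) (mconst z) = (mconst (poly R z) :: ('v, 'a::comm_ring_1) mpoly)"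
  by (rule mc.poly_map_poly)

lemma single_eq: "Poly_Mapping.single k v = (mconst v * Poly_Mapping.single k 1 :: ('v, 'a::comm_ring_1) mpoly)"
  by (simp add: mconst_def mult_single)

lemma ideal_cong_trans: "is_ideal J \<Longrightarrow> a - b \<in> J \<Longrightarrow> b \<in> J \<Longrightarrow> a \<in> J"
  using ideal_add[of J "a - b" b] by simp

lemma sum_prod_split: "(\<Sum>a\<in>A \<times> B. h a) = (\<Sum>x\<in>A. \<Sum>y\<in>B. h (x, y))"
  by (simp add: sum.cartesian_product)

lemma spans_quot_eq: "spans_quot J B = spanI (\<lambda>c p. mconst c * p) J B (\<lambda>x. x)"
  by (simp add: spans_quot_def spanI_def)

lemma ideal_deg_eq: "ideal_deg J = dimJ (\<lambda>c p. mconst c * p) J"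
  by (simp add: ideal_deg_def dimJ_def spans_quot_eq)

context
  fixes I :: "('v, 'a::field) mpoly set" and xn :: 'v and P :: "'a poly" and e :: nat
    and \<phi> :: "'a \<Rightarrow> 'b::field" and \<zeta> :: 'b
  assumes perf: "perfect_field TYPE('a)" and I: "is_ideal I" and Ae: "eval_upoly (P ^ e) (mvar xn) \<in> I"
    and IU: "I \<noteq> UNIV" and irr: "irreducible P" and stem: "is_stem_field \<phi> \<zeta> P"
begin

lemma hom: "is_ring_hom \<phi>" using stem by (simp add: is_stem_field_def)

interpretation fh: field_hom \<phi> by (rule is_ring_hom_field_hom[OF hom])
interpretation th: comm_ring_hom "map_mpoly \<phi> :: ('v, 'a) mpoly \<Rightarrow> ('v, 'b) mpoly" by (rule map_mpoly_hom[OF hom])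
interpretation mth: map_poly_comm_ring_hom "map_mpoly \<phi> :: ('v, 'a) mpoly \<Rightarrow> ('v, 'b) mpoly" ..
interpretation mph: comm_ring_hom "\<lambda>c. mconst (\<phi> c) :: ('v, 'b) mpoly" by (rule mconst_phi_hom[OF hom])

definition I' :: "('v, 'b) mpoly set" where
  "I' = ideal_gen (map_mpoly \<phi> ` I \<union> {(mvar xn - mconst \<zeta>) ^ e})"

lemma I'_ideal: "is_ideal I'" unfolding I'_def by (rule ideal_gen_ideal)
lemma I'_sub: "map_mpoly \<phi> ` I \<union> {(mvar xn - mconst \<zeta>) ^ e} \<subseteq> I'"
  unfolding I'_def by (rule ideal_gen_sub)
lemma I'_img: "g \<in> I \<Longrightarrow> map_mpoly \<phi> g \<in> I'" using I'_sub by blast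
lemma I'_gen: "(mvar xn - mconst \<zeta>) ^ e \<in> I'" using I'_sub by blast

lemma e_pos: "e > 0"
proof (rule ccontr)
  assume "\<not> e > 0"
  then have "e = 0" by simp
  then have "(1 :: ('v, 'a) mpoly) \<in> I" using Ae by (simp add: eval_upoly_def)
  then show False using ideal_UNIV[OF I] IU by blast
qed

lemma exists_t: "\<exists>t w'. eval_upoly P t \<in> I \<and> (mvar xn - t) ^ e \<in> I \<and>
    mvar xn - t - eval_upoly P (mvar xn) * w' \<in> I"
proof -
  obtain u0 v0 where uv: "u0 * P + v0 * pderiv P = 1"
    using bezout_irred[OF irr perfect_separable[OF perf irr]] by blast
  define Pm where "Pm = (map_poly mconst P :: ('v, 'a) mpoly poly)"
  define Dm where "Dm = (map_poly mconst (pderiv P) :: ('v, 'a) mpoly poly)"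
  have bez: "map_poly mconst v0 * Dm + map_poly mconst u0 * Pm = 1"
  proof -
    have "map_poly mconst (v0 * pderiv P + u0 * P) = (1 :: ('v, 'a) mpoly poly)"
      using uv by (simp add: algebra_simps)
    then show ?thesis unfolding Dm_def Pm_def by (simp add: mmc.hom_add mmc.hom_mult)
  qed
  have tay: "\<exists>r. poly Pm (x + h) = poly Pm x + poly Dm x * h + h ^ 2 * r" for x h
    unfolding Pm_def Dm_def by (rule poly_taylor_hom[OF mconst_hom])
  have "(poly Pm (mvar xn)) ^ e \<in> I"
    using Ae unfolding eval_upoly_def Pm_def by (simp add: hom_distribs)
  from newton[OF I bez tay e_pos this] show ?thesis unfolding eval_upoly_def Pm_def by blast
qed

definition t :: "('v, 'a) mpoly" where
  "t = (SOME t. \<exists>w'. eval_upoly P t \<in> I \<and> (mvar xn - t) ^ e \<in> I \<and>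
    mvar xn - t - eval_upoly P (mvar xn) * w' \<in> I)"

lemma t_prop: "\<exists>w'. eval_upoly P t \<in> I \<and> (mvar xn - t) ^ e \<in> I \<and>
    mvar xn - t - eval_upoly P (mvar xn) * w' \<in> I"
  unfolding t_def using someI_ex[OF exists_t] .

lemma Pt: "eval_upoly P t \<in> I" using t_prop by blast
lemma yt: "(mvar xn - t) ^ e \<in> I" using t_prop by blast

lemma theta_eval: "map_mpoly \<phi> (eval_upoly q (x :: ('v, 'a) mpoly)) = poly (map_poly (\<lambda>c. mconst (\<phi> c)) q) (map_mpoly \<phi> x)"
proof -
  have "map_mpoly \<phi> (eval_upoly q x) = poly (map_poly (map_mpoly \<phi>) (map_poly mconst q)) (map_mpoly \<phi> x)"
    unfolding eval_upoly_def by (rule th.poly_map_poly[symmetric])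
  then show ?thesis by (simp add: map_poly_mconst_phi[OF hom])
qed

lemma poly_hphi_zeta: "poly (map_poly (\<lambda>c. mconst (\<phi> c)) R) (mconst \<zeta>) = (mconst (poly (map_poly \<phi> R) \<zeta>) :: ('v, 'b) mpoly)"
  unfolding map_poly_mconst_phi(2)[OF hom, symmetric] by (rule poly_mconst)

lemma zeta_cong: "mconst \<zeta> - map_mpoly \<phi> t \<in> I'"
proof -
  define Y where "Y = (mvar xn :: ('v, 'b) mpoly)"
  define n where "n = map_mpoly \<phi> t - mconst \<zeta>"
  have J: "is_ideal I'" by (rule I'_ideal)
  obtain w' where w': "mvar xn - t - eval_upoly P (mvar xn) * w' \<in> I" using t_prop by blast
  have "poly (map_poly \<phi> P) \<zeta> = 0" by (rule stem_root[OF stem irr])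
  then obtain Q where Q: "map_poly \<phi> P = [:-\<zeta>, 1:] * Q" using poly_eq_0_iff_dvd by blast
  have thA: "map_mpoly \<phi> (eval_upoly P (mvar xn)) = (Y - mconst \<zeta>) * poly (map_poly mconst Q) Y"
  proof -
    have "map_mpoly \<phi> (eval_upoly P (mvar xn)) = poly (map_poly mconst (map_poly \<phi> P)) Y"
      unfolding theta_eval map_poly_mconst_phi(2)[OF hom] Y_def map_mpoly_mvar[OF hom] ..
    also have "\<dots> = (Y - mconst \<zeta>) * poly (map_poly mconst Q) Y"
    proof -
      have l: "poly (map_poly mconst [:-\<zeta>, 1:]) Y = Y - mconst \<zeta>"
        by (simp add: mc.map_poly_pCons_hom mc.hom_uminus)
      show ?thesis unfolding Q mmc.hom_mult poly_mult l ..
    qed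
    finally show ?thesis .
  qed
  define G where "G = 1 - poly (map_poly mconst Q) Y * map_mpoly \<phi> w'"
  have "map_mpoly \<phi> (mvar xn - t - eval_upoly P (mvar xn) * w') \<in> I'" using I'_img[OF w'] .
  then have "Y - map_mpoly \<phi> t - (Y - mconst \<zeta>) * poly (map_poly mconst Q) Y * map_mpoly \<phi> w' \<in> I'"
    by (simp add: th.hom_minus th.hom_mult thA map_mpoly_mvar[OF hom] Y_def)
  moreover have "Y - map_mpoly \<phi> t - (Y - mconst \<zeta>) * poly (map_poly mconst Q) Y * map_mpoly \<phi> w'
      = (Y - mconst \<zeta>) * G - n"
    unfolding G_def n_def by (simp add: algebra_simps)
  ultimately have "(Y - mconst \<zeta>) * G - n \<in> I'" by simp
  then have "n - (Y - mconst \<zeta>) * G \<in> I'" using ideal_uminus[OF J] by fastforce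
  then have "n ^ e - ((Y - mconst \<zeta>) * G) ^ e \<in> I'" by (rule cong_power[OF J])
  moreover have "((Y - mconst \<zeta>) * G) ^ e \<in> I'"
    using I'_gen ideal_mult2[OF J] unfolding Y_def by (metis power_mult_distrib)
  ultimately have ne: "n ^ e \<in> I'" using J by (metis diff_add_cancel ideal_add)
  obtain r where r: "poly (map_poly (\<lambda>c. mconst (\<phi> c)) P) (mconst \<zeta> + n) =
      poly (map_poly (\<lambda>c. mconst (\<phi> c)) P) (mconst \<zeta>) + poly (map_poly (\<lambda>c. mconst (\<phi> c)) (pderiv P)) (mconst \<zeta>) * n + n ^ 2 * r"
    using poly_taylor_hom[OF mconst_phi_hom[OF hom]] by blast
  define c where "c = poly (map_poly \<phi> (pderiv P)) \<zeta>"
  have c0: "c \<noteq> 0" unfolding c_def using stem_root_iff[OF stem irr] perfect_separable[OF perf irr] by simp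
  have "poly (map_poly (\<lambda>c. mconst (\<phi> c)) P) (mconst \<zeta> + n) = map_mpoly \<phi> (eval_upoly P t)"
    unfolding theta_eval n_def by simp
  then have "poly (map_poly (\<lambda>c. mconst (\<phi> c)) P) (mconst \<zeta> + n) \<in> I'" using I'_img[OF Pt] by simp
  then have "mconst c * n + n ^ 2 * r \<in> I'"
    using r unfolding poly_hphi_zeta c_def by (simp add: stem_root[OF stem irr])
  then have "mconst (inverse c) * (mconst c * n + n ^ 2 * r) \<in> I'" by (rule ideal_mult[OF J])
  moreover have "mconst (inverse c) * (mconst c * n + n ^ 2 * r) = n - n * (- (n * (mconst (inverse c) * r)))"
  proof -
    have "mconst (inverse c) * mconst c = (1 :: ('v, 'b) mpoly)" using c0 by (simp flip: mc.hom_mult)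
    then show ?thesis by (simp add: algebra_simps power2_eq_square)
  qed
  ultimately have nm: "n - n * m \<in> I'" if "m = - (n * (mconst (inverse c) * r))" for m using that by simp
  define m where "m = - (n * (mconst (inverse c) * r))"
  have nmk: "n - n * m ^ k \<in> I'" for k
  proof (induct k)
    case 0 then show ?case by (simp add: ideal_0[OF J])
  next
    case (Suc k)
    have "n - n * m ^ Suc k = (n - n * m ^ k) + (n - n * m) * m ^ k" by (simp add: algebra_simps)
    then show ?case using Suc nm[OF m_def] J by (metis ideal_add ideal_mult2)
  qed
  have "n * m ^ e = n ^ e * (n * (- (mconst (inverse c) * r)) ^ e)"
  proof -
    have "m = n * (- (mconst (inverse c) * r))" unfolding m_def by simp
    then show ?thesis by (simp only: power_mult_distrib) (simp add: mult_ac)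
  qed
  then have "n * m ^ e \<in> I'" using ne J by (metis ideal_mult2)
  then have "n \<in> I'" using nmk[of e] J by (metis diff_add_cancel ideal_add)
  then show ?thesis using ideal_uminus[OF J] unfolding n_def by fastforce
qed


lemma theta_single1: "map_mpoly \<phi> (Poly_Mapping.single k 1 :: ('v, 'a) mpoly) = Poly_Mapping.single k 1"
  by (simp add: map_mpoly_single[OF hom])

lemma surj: "\<exists>g. p - map_mpoly \<phi> g \<in> I'"
proof (induct p rule: pm_induct)
  case 1
  have "0 - map_mpoly \<phi> 0 \<in> I'" by (simp add: th.hom_zero ideal_0[OF I'_ideal])
  then show ?case by blast
next
  case (2 f k v)
  obtain g where g: "f - map_mpoly \<phi> g \<in> I'" using 2 by blast
  obtain q where v: "v = poly (map_poly \<phi> q) \<zeta>" using stem_surj[OF stem irr] by blast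
  define g' where "g' = g + eval_upoly q t * Poly_Mapping.single k 1"
  have mv: "(mconst v :: ('v, 'b) mpoly) = poly (map_poly (\<lambda>c. mconst (\<phi> c)) q) (mconst \<zeta>)" unfolding v by (rule poly_hphi_zeta[symmetric])
  have c: "poly (map_poly (\<lambda>c. mconst (\<phi> c)) q) (mconst \<zeta>) - poly (map_poly (\<lambda>c. mconst (\<phi> c)) q) (map_mpoly \<phi> t) \<in> I'"
    by (rule cong_poly[OF I'_ideal zeta_cong])
  have te: "poly (map_poly (\<lambda>c. mconst (\<phi> c)) q) (map_mpoly \<phi> t) = map_mpoly \<phi> (eval_upoly q t)"
    by (simp add: theta_eval)
  have c2: "mconst v - map_mpoly \<phi> (eval_upoly q t) \<in> I'" using c unfolding mv te .
  have sk: "Poly_Mapping.single k v = mconst v * Poly_Mapping.single k (1::'b)" by (rule single_eq)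
  have eq: "f + Poly_Mapping.single k v - map_mpoly \<phi> g' =
      (f - map_mpoly \<phi> g) + (mconst v - map_mpoly \<phi> (eval_upoly q t)) * Poly_Mapping.single k 1"
    unfolding g'_def sk by (simp add: th.hom_add th.hom_mult theta_single1 algebra_simps)
  have "f + Poly_Mapping.single k v - map_mpoly \<phi> g' \<in> I'"
    unfolding eq by (rule ideal_add[OF I'_ideal g ideal_mult2[OF I'_ideal c2]])
  then show ?case by blast
qed

definition evL :: "('v, 'a) mpoly poly \<Rightarrow> ('v, 'b) mpoly" where
  "evL Q = poly (map_poly (map_mpoly \<phi>) Q) (mconst \<zeta>)"

lemma evL_add: "evL (Q1 + Q2) = evL Q1 + evL Q2" unfolding evL_def by (simp add: mth.hom_add)
lemma evL_diff: "evL (Q1 - Q2) = evL Q1 - evL Q2" unfolding evL_def by (simp add: mth.hom_minus)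
lemma evL_mult: "evL (Q1 * Q2) = evL Q1 * evL Q2" unfolding evL_def by (simp add: mth.hom_mult)
lemma evL_power: "evL (Q ^ n) = evL Q ^ n" unfolding evL_def by (simp add: mth.hom_power)
lemma evL_const: "evL [:g:] = map_mpoly \<phi> g" unfolding evL_def by (simp add: th.map_poly_pCons_hom)
lemma evL_zero: "evL 0 = 0" unfolding evL_def by simp
lemma evL_mconst: "evL (map_poly mconst q) = mconst (poly (map_poly \<phi> q) \<zeta>)"
  unfolding evL_def map_poly_mconst_phi(1)[OF hom] by (rule poly_hphi_zeta)
lemma evL_smult: "evL (Polynomial.smult c R) = map_mpoly \<phi> c * evL R"
  unfolding evL_def by (simp add: th.map_poly_hom_smult)

lemma evL_surj: "\<exists>Q. evL Q = p"
proof (induct p rule: pm_induct)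
  case 1 then show ?case using evL_zero by blast
next
  case (2 f k v)
  obtain Q where Q: "evL Q = f" using 2 by blast
  obtain q where v: "v = poly (map_poly \<phi> q) \<zeta>" using stem_surj[OF stem irr] by blast
  have "evL (Q + Polynomial.smult (Poly_Mapping.single k 1) (map_poly mconst q)) = f + Poly_Mapping.single k v"
    unfolding evL_add evL_smult evL_mconst Q theta_single1 single_eq[of k v] v[symmetric] by (simp add: mult.commute)
  then show ?case by blast
qed

lemma lookup_evL: "Poly_Mapping.lookup (evL R) \<alpha> = poly (map_poly \<phi> (map_poly (\<lambda>g. Poly_Mapping.lookup g \<alpha>) R)) \<zeta>"
proof (induct R)
  case 0 then show ?case by (simp add: evL_zero)
next
  case (pCons a R)
  have "evL (pCons a R) = map_mpoly \<phi> a + mconst \<zeta> * evL R"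
    unfolding evL_def by (simp add: th.map_poly_pCons_hom)
  moreover have "map_poly (\<lambda>g. Poly_Mapping.lookup g \<alpha>) (pCons a R) = pCons (Poly_Mapping.lookup a \<alpha>) (map_poly (\<lambda>g. Poly_Mapping.lookup g \<alpha>) R)"
    by (rule poly_eqI) (simp add: coeff_map_poly coeff_pCons split: nat.split)
  ultimately show ?case using pCons(2)
    by (simp add: lookup_add lookup_map_mpoly[OF hom] lookup_mconst_mult fh.map_poly_pCons_hom)
qed

lemma evL_kernel: "evL Q = 0 \<Longrightarrow> poly Q t \<in> I"
proof -
  assume Q0: "evL Q = 0"
  have P0: "P \<noteq> 0" using irr by auto
  define c where "c = inverse (lead_coeff P)"
  have c0: "c \<noteq> 0" using P0 unfolding c_def by simp
  define P0 where "P0 = Polynomial.smult c P"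
  define Pm0 where "Pm0 = (map_poly mconst P0 :: ('v, 'a) mpoly poly)"
  have dP0: "degree P0 = degree P" unfolding P0_def using c0 by simp
  have lP0: "lead_coeff P0 = 1" unfolding P0_def c_def using P0 by simp
  have dPm0: "degree Pm0 = degree P0" unfolding Pm0_def
  proof (rule Polynomial.degree_map_poly)
    fix x :: 'a assume "x \<noteq> 0"
    then show "(mconst x :: ('v, 'a) mpoly) \<noteq> 0" using mconst_inj[of x 0] by (simp add: mc.hom_zero)
  qed
  have lPm0: "coeff Pm0 (degree Pm0) = 1" unfolding dPm0 unfolding Pm0_def using lP0 by simp
  have Pm00: "Pm0 \<noteq> 0" using lPm0 by auto
  obtain q1 q2 where pd: "pseudo_divmod Q Pm0 = (q1, q2)" by (cases "pseudo_divmod Q Pm0") auto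
  have Qeq: "Q = Pm0 * q1 + q2" using pseudo_divmod(1)[OF Pm00 pd] lPm0 by simp
  have q2d: "q2 = 0 \<or> degree q2 < degree P" using pseudo_divmod(2)[OF Pm00 pd] dPm0 dP0 by simp
  have "evL Pm0 = 0"
    unfolding Pm0_def evL_mconst P0_def by (simp add: fh.map_poly_hom_smult stem_root[OF stem irr])
  then have eq2: "evL q2 = 0" using Q0 unfolding Qeq evL_add evL_mult by simp
  have "q2 = 0"
  proof (cases "q2 = 0")
    case False
    then have dq: "degree q2 < degree P" using q2d by simp
    have "coeff q2 j = 0" for j
    proof (rule poly_mapping_eqI)
      fix \<alpha>
      define R where "R = map_poly (\<lambda>g. Poly_Mapping.lookup g \<alpha>) q2"
      have "degree R \<le> degree q2" unfolding R_def by (rule degree_map_poly_le)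
      then have dR: "degree R < degree P" using dq by simp
      have "poly (map_poly \<phi> R) \<zeta> = 0" using lookup_evL[of q2 \<alpha>] eq2 unfolding R_def by simp
      then have "R = 0" by (rule stem_small_zero[OF stem irr dR])
      then have "coeff R j = 0" by simp
      then show "Poly_Mapping.lookup (coeff q2 j) \<alpha> = Poly_Mapping.lookup 0 \<alpha>" unfolding R_def by (simp add: coeff_map_poly)
    qed
    then show ?thesis by (simp add: poly_eqI)
  qed simp
  then have "poly Q t = poly Pm0 t * poly q1 t" unfolding Qeq by simp
  moreover have "poly Pm0 t = mconst c * eval_upoly P t"
    unfolding Pm0_def P0_def eval_upoly_def by (simp add: mc.map_poly_hom_smult)
  ultimately have "poly Q t = (mconst c * eval_upoly P t) * poly q1 t" by simp
  then show "poly Q t \<in> I" using ideal_mult2[OF I ideal_mult[OF I Pt]] by simp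
qed

lemma evL_cong: "evL Q1 = evL Q2 \<Longrightarrow> poly Q1 t - poly Q2 t \<in> I"
  using evL_kernel[of "Q1 - Q2"] by (simp add: evL_diff)

definition S :: "('v, 'b) mpoly set" where "S = {p. \<forall>Q. evL Q = p \<longrightarrow> poly Q t \<in> I}"

lemma S_intro:
  assumes "evL Q0 = p" "poly Q0 t \<in> I"
  shows "p \<in> S"
  unfolding S_def
proof (intro CollectI allI impI)
  fix Q assume "evL Q = p"
  then have "poly Q t - poly Q0 t \<in> I" using evL_cong assms(1) by simp
  then show "poly Q t \<in> I" by (rule ideal_cong_trans[OF I _ assms(2)])
qed

lemma S_ideal: "is_ideal S"
  unfolding is_ideal_def
proof (intro conjI ballI allI)
  show "0 \<in> S" by (rule S_intro[of 0]) (simp_all add: evL_zero ideal_0[OF I])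
next
  fix a b assume a: "a \<in> S" and b: "b \<in> S"
  obtain Qa where Qa: "evL Qa = a" using evL_surj by blast
  obtain Qb where Qb: "evL Qb = b" using evL_surj by blast
  have "poly Qa t \<in> I" "poly Qb t \<in> I" using a b Qa Qb unfolding S_def by auto
  then show "a + b \<in> S" by (intro S_intro[of "Qa + Qb"]) (simp_all add: evL_add Qa Qb ideal_add[OF I])
next
  fix a r assume a: "a \<in> S"
  obtain Qa where Qa: "evL Qa = a" using evL_surj by blast
  obtain Qr where Qr: "evL Qr = r" using evL_surj by blast
  have "poly Qa t \<in> I" using a Qa unfolding S_def by auto
  then show "r * a \<in> S" by (intro S_intro[of "Qr * Qa"]) (simp_all add: evL_mult Qa Qr ideal_mult[OF I])
qed

lemma I'_sub_S: "I' \<subseteq> S"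
  unfolding I'_def
proof (rule ideal_gen_least[OF S_ideal])
  show "map_mpoly \<phi> ` I \<union> {(mvar xn - mconst \<zeta>) ^ e} \<subseteq> S"
  proof
    fix x assume "x \<in> map_mpoly \<phi> ` I \<union> {(mvar xn - mconst \<zeta>) ^ e}"
    then show "x \<in> S"
    proof
      assume "x \<in> map_mpoly \<phi> ` I"
      then obtain g where g: "g \<in> I" "x = map_mpoly \<phi> g" by blast
      show "x \<in> S" by (rule S_intro[of "[:g:]"]) (simp_all add: evL_const g)
    next
      assume "x \<in> {(mvar xn - mconst \<zeta>) ^ e}"
      then have x: "x = (mvar xn - mconst \<zeta>) ^ e" by simp
      have "evL [:mvar xn, -1:] = mvar xn - mconst \<zeta>"
        unfolding evL_def by (simp add: th.map_poly_pCons_hom th.hom_uminus map_mpoly_mvar[OF hom])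
      then have "evL ([:mvar xn, -1:] ^ e) = x" unfolding x evL_power by simp
      moreover have "poly ([:mvar xn, -1:] ^ e) t \<in> I" using yt by simp
      ultimately show "x \<in> S" by (rule S_intro)
    qed
  qed
qed

lemma inj: "map_mpoly \<phi> g \<in> I' \<Longrightarrow> g \<in> I"
proof -
  assume "map_mpoly \<phi> g \<in> I'"
  then have "map_mpoly \<phi> g \<in> S" using I'_sub_S by blast
  then have "\<forall>Q. evL Q = map_mpoly \<phi> g \<longrightarrow> poly Q t \<in> I" unfolding S_def by simp
  then have "poly [:g:] t \<in> I" using evL_const[of g] by blast
  then show "g \<in> I" by simp
qed


lemma deg_main:
  assumes zd: "zero_dimensional I"
  shows "ideal_deg I' * degree P = ideal_deg I"
proof -
  define f where "f = degree P"
  interpret VK: vector_space "\<lambda>c (p::('v, 'a) mpoly). mconst c * p" by (rule vs_mconst)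
  interpret VL: vector_space "\<lambda>c (p::('v, 'b) mpoly). mconst c * p" by (rule vs_mconst)
  interpret VKL: vector_space "\<lambda>c (p::('v, 'b) mpoly). mconst (\<phi> c) * p" by (rule vs_mconst_hom[OF hom])
  have subK: "VK.subspace I" by (rule ideal_subspace'[OF I])
  have subL: "VL.subspace I'" by (rule ideal_subspace'[OF I'_ideal])
  have subKL: "VKL.subspace I'" by (rule ideal_subspace[OF hom I'_ideal])
  obtain B0 where B0: "finite B0" "spans_quot I B0" using zd unfolding zero_dimensional_def by blast
  obtain B where B: "finite B" "spanI (\<lambda>c p. mconst c * p) I B (\<lambda>x. x)" "indepI (\<lambda>c p. mconst c * p) I B (\<lambda>x. x)"
    using VK.basis_exists_J[OF subK B0(1)] B0(2) unfolding spans_quot_eq by blast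
  have D: "ideal_deg I = card B" unfolding ideal_deg_eq by (rule VK.dimJ_eq[OF subK B(1) B(2) B(3)])
  have th_sum: "map_mpoly \<phi> (\<Sum>b\<in>B. mconst (c b) * b) = (\<Sum>b\<in>B. mconst (\<phi> (c b)) * map_mpoly \<phi> b)" for c
    by (simp add: th.hom_sum th.hom_mult map_mpoly_mconst[OF hom])
  have spanKL: "spanI (\<lambda>c p. mconst (\<phi> c) * p) I' B (map_mpoly \<phi>)"
    unfolding spanI_def
  proof
    fix p :: "('v, 'b) mpoly"
    obtain g where g: "p - map_mpoly \<phi> g \<in> I'" using surj by blast
    obtain c where c: "g - (\<Sum>b\<in>B. mconst (c b) * b) \<in> I" using B(2) unfolding spanI_def by blast
    have "map_mpoly \<phi> (g - (\<Sum>b\<in>B. mconst (c b) * b)) \<in> I'" by (rule I'_img[OF c])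
    then have c': "map_mpoly \<phi> g - (\<Sum>b\<in>B. mconst (\<phi> (c b)) * map_mpoly \<phi> b) \<in> I'"
      by (simp add: th.hom_minus th_sum)
    have "p - (\<Sum>b\<in>B. mconst (\<phi> (c b)) * map_mpoly \<phi> b) \<in> I'"
      using ideal_add[OF I'_ideal g c'] by simp
    then show "\<exists>c. p - (\<Sum>b\<in>B. mconst (\<phi> (c b)) * map_mpoly \<phi> b) \<in> I'" by blast
  qed
  have indepKL: "indepI (\<lambda>c p. mconst (\<phi> c) * p) I' B (map_mpoly \<phi>)"
    unfolding indepI_def
  proof (intro allI impI)
    fix c assume "(\<Sum>b\<in>B. mconst (\<phi> (c b)) * map_mpoly \<phi> b) \<in> I'"
    then have "map_mpoly \<phi> (\<Sum>b\<in>B. mconst (c b) * b) \<in> I'" by (simp add: th_sum)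
    then have "(\<Sum>b\<in>B. mconst (c b) * b) \<in> I" by (rule inj)
    then show "\<forall>b\<in>B. c b = 0" using B(3) unfolding indepI_def by blast
  qed
  have dKL: "dimJ (\<lambda>c p. mconst (\<phi> c) * p) I' = card B"
    by (rule VKL.dimJ_eq[OF subKL B(1) spanKL indepKL])
  have spanL: "spanI (\<lambda>c p. mconst c * p) I' B (map_mpoly \<phi>)"
    unfolding spanI_def
  proof
    fix p :: "('v, 'b) mpoly"
    obtain c where h: "p - (\<Sum>b\<in>B. mconst (\<phi> (c b)) * map_mpoly \<phi> b) \<in> I'" using spanKL unfolding spanI_def by blast
    show "\<exists>c. p - (\<Sum>b\<in>B. mconst (c b) * map_mpoly \<phi> b) \<in> I'"
      using h by (intro exI[of _ "\<lambda>b. \<phi> (c b)"]) (simp only:)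
  qed
  obtain C where C: "finite C" "spanI (\<lambda>c p. mconst c * p) I' C (\<lambda>x. x)" "indepI (\<lambda>c p. mconst c * p) I' C (\<lambda>x. x)"
    using VL.basis_exists_J[OF subL finite_imageI[OF B(1)] VL.spanI_image[OF B(1) spanL]] by blast
  have d: "ideal_deg I' = card C" unfolding ideal_deg_eq by (rule VL.dimJ_eq[OF subL C(1) C(2) C(3)])
  define A where "A = {..<f} \<times> C"
  define v where "v a = mconst (\<zeta> ^ fst a) * snd a" for a :: "nat \<times> ('v, 'b) mpoly"
  have fA: "finite A" unfolding A_def using C(1) by simp
  have cardA: "card A = f * card C" unfolding A_def by (simp add: card_cartesian_product)
  have resum: "(\<Sum>a\<in>A. mconst (\<phi> (c a)) * v a) = (\<Sum>x\<in>C. mconst (\<Sum>j<f. \<phi> (c (j, x)) * \<zeta> ^ j) * x)" for c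
  proof -
    have "(\<Sum>a\<in>A. mconst (\<phi> (c a)) * v a) = (\<Sum>j<f. \<Sum>x\<in>C. mconst (\<phi> (c (j, x))) * v (j, x))"
      unfolding A_def by (rule sum_prod_split)
    also have "\<dots> = (\<Sum>x\<in>C. \<Sum>j<f. mconst (\<phi> (c (j, x))) * v (j, x))"
      by (rule sum.swap)
    also have "\<dots> = (\<Sum>x\<in>C. \<Sum>j<f. mconst (\<phi> (c (j, x)) * \<zeta> ^ j) * x)"
    proof (intro sum.cong refl)
      fix x j
      show "mconst (\<phi> (c (j, x))) * v (j, x) = mconst (\<phi> (c (j, x)) * \<zeta> ^ j) * x"
        unfolding v_def mc.hom_mult by (simp only: fst_conv snd_conv mult.assoc)
    qed
    also have "\<dots> = (\<Sum>x\<in>C. mconst (\<Sum>j<f. \<phi> (c (j, x)) * \<zeta> ^ j) * x)"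
      by (simp only: mc.hom_sum sum_distrib_right)
    finally show ?thesis .
  qed
  have spanA: "spanI (\<lambda>c p. mconst (\<phi> c) * p) I' A v"
    unfolding spanI_def
  proof
    fix p :: "('v, 'b) mpoly"
    obtain l where l: "p - (\<Sum>x\<in>C. mconst (l x) * x) \<in> I'" using C(2) unfolding spanI_def by blast
    have "\<forall>x. \<exists>k. l x = (\<Sum>j<f. \<phi> (k j) * \<zeta> ^ j)"
    proof
      fix x show "\<exists>k. l x = (\<Sum>j<f. \<phi> (k j) * \<zeta> ^ j)" unfolding f_def by (rule stem_basis_span[OF stem irr])
    qed
    from choice[OF this] obtain k where k0: "\<forall>x. l x = (\<Sum>j<f. \<phi> (k x j) * \<zeta> ^ j)" by blast
    have k: "l x = (\<Sum>j<f. \<phi> (k x j) * \<zeta> ^ j)" for x using k0 by blast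
    define c where "c a = k (snd a) (fst a)" for a :: "nat \<times> ('v, 'b) mpoly"
    have eqs: "(\<Sum>a\<in>A. mconst (\<phi> (c a)) * v a) = (\<Sum>x\<in>C. mconst (l x) * x)"
      unfolding resum c_def k by simp
    show "\<exists>c. p - (\<Sum>a\<in>A. mconst (\<phi> (c a)) * v a) \<in> I'"
    proof (rule exI[of _ c])
      show "p - (\<Sum>a\<in>A. mconst (\<phi> (c a)) * v a) \<in> I'" unfolding eqs by (rule l)
    qed
  qed
  have indepA: "indepI (\<lambda>c p. mconst (\<phi> c) * p) I' A v"
    unfolding indepI_def
  proof (intro allI impI ballI)
    fix c a assume h: "(\<Sum>a\<in>A. mconst (\<phi> (c a)) * v a) \<in> I'" and a: "a \<in> A"
    then have hs: "(\<Sum>x\<in>C. mconst (\<Sum>j<f. \<phi> (c (j, x)) * \<zeta> ^ j) * x) \<in> I'" unfolding resum by simp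
    have "\<forall>c'. (\<Sum>y\<in>C. mconst (c' y) * y) \<in> I' \<longrightarrow> (\<forall>y\<in>C. c' y = 0)"
      using C(3) unfolding indepI_def by simp
    then have "(\<Sum>y\<in>C. mconst ((\<lambda>y. \<Sum>j<f. \<phi> (c (j, y)) * \<zeta> ^ j) y) * y) \<in> I' \<longrightarrow>
        (\<forall>y\<in>C. (\<lambda>y. \<Sum>j<f. \<phi> (c (j, y)) * \<zeta> ^ j) y = 0)" by (rule spec)
    then have z: "\<forall>x\<in>C. (\<Sum>j<f. \<phi> (c (j, x)) * \<zeta> ^ j) = 0" using hs by simp
    obtain j x where ax: "a = (j, x)" "j < f" "x \<in> C" using a unfolding A_def by blast
    have "\<forall>j<degree P. c (j, x) = 0"
      by (rule stem_basis_indep[OF stem irr]) (use z ax in \<open>simp add: f_def\<close>)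
    then show "c a = 0" using ax unfolding f_def by simp
  qed
  have "dimJ (\<lambda>c p. mconst (\<phi> c) * p) I' = card A"
    by (rule VKL.dimJ_eq[OF subKL fA spanA indepA])
  then have "card B = f * card C" using dKL cardA by simp
  then show ?thesis unfolding D d f_def by simp
qed

lemma deg_main':
  assumes zd: "zero_dimensional I"
  shows "ideal_deg (ideal_gen (map_mpoly \<phi> ` I \<union> {(mvar xn - mconst \<zeta>) ^ e})) * degree P = ideal_deg I"
  using deg_main[OF zd] unfolding I'_def .

end


theorem lemma7:
  fixes I M :: "('v::finite, 'a::field) mpoly set"
    and xn :: 'v
    and P :: "'a poly" and e f :: nat
    and \<phi> :: "'a \<Rightarrow> 'b::field" and \<zeta> :: 'b
  assumes "perfect_field TYPE('a)"
    and "zero_dimensional I"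
    and "is_maximal_ideal M"
    and "is_primary_for I M"
    and "is_minpoly_mod I (mvar xn) (P ^ e)"
    and "irreducible P" and "degree P = f"
    and "is_stem_field \<phi> \<zeta> P"
  shows "real (ideal_deg (ideal_gen (map_mpoly \<phi> ` I \<union> {(mvar xn - mconst \<zeta>) ^ e})))
         = real (ideal_deg I) / real f"
proof -
  have I: "is_ideal I" and IU: "I \<noteq> UNIV" using assms(4) unfolding is_primary_for_def by auto
  have Ae: "eval_upoly (P ^ e) (mvar xn) \<in> I" using assms(5) unfolding is_minpoly_mod_def by auto
  have main: "ideal_deg (ideal_gen (map_mpoly \<phi> ` I \<union> {(mvar xn - mconst \<zeta>) ^ e})) * degree P = ideal_deg I"
    by (rule deg_main'[OF assms(1) I Ae IU assms(6) assms(8) assms(2)])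
  have fpos: "f > 0" using irreducible_degree_pos[OF assms(6)] assms(7) by simp
  have "real (ideal_deg (ideal_gen (map_mpoly \<phi> ` I \<union> {(mvar xn - mconst \<zeta>) ^ e}))) * real f = real (ideal_deg I)"
    using main assms(7) by (metis of_nat_mult)
  then show ?thesis using fpos by (simp add: field_simps)
qed


end
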